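(* Let $\omega_1,\omega_2\in\Omega_+$ with $\omega_1\le\omega_2$ (i.e. $\omega_1(x,i)\le\omega_2(x,i)$ for all $x\in\mathbb Z$, $i\ge1$), let $-\infty\le x\le y\le z\le+\infty$ with $y\in\mathbb Z$, and let $t\in\mathbb N\cup\{\infty\}$. Then \[P_{y,\omega_1}[T_z\le T_x\wedge t]\le P_{y,\omega_2}[T_z\le T_x\wedge t].\]
   Context: Cookie environments: $\Omega_+=([1/2,1]^{\mathbb N})^{\mathbb Z}$. $P_{x,\omega}$ is the law of the nearest-neighbor process $(X_n)_{n\ge0}$ with $X_0=x$ which, on its $i$-th visit to site $z$, jumps to $z+1$ with probability $\omega(z,i)$ and to $z-1$ otherwise. $T_k=\inf\{n\ge0:X_n=k\}$ for $k\in\mathbb Z$, and $T_\infty=T_{-\infty}=\infty$. *)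

theory Defs
  imports "HOL-Probability.Probability" "HOL-Library.Extended"
begin

text \<open>Cookie environments: omega z i is the probability of jumping right on the
  i-th visit (i >= 1) to site z. Values at i = 0 are never used.\<close>

definition Omega_plus :: "(int \<Rightarrow> nat \<Rightarrow> real) set" where
  "Omega_plus = {\<omega>. \<forall>z. \<forall>i\<ge>1. 1/2 \<le> \<omega> z i \<and> \<omega> z i \<le> 1}"

text \<open>Cookie-stack construction: independent coins xi (z,i) with
  P[xi (z,i)] = omega z i; on the i-th visit to z the walk steps right iff xi (z,i).\<close>

definition coin_space :: "(int \<Rightarrow> nat \<Rightarrow> real) \<Rightarrow> (int \<times> nat \<Rightarrow> bool) measure" where
  "coin_space \<omega> = PiM UNIV (\<lambda>(z,i). measure_pmf (bernoulli_pmf (\<omega> z i)))"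

text \<open>State: current position and number of visits so far to each site
  (including the current visit).\<close>

fun walk_state :: "(int \<times> nat \<Rightarrow> bool) \<Rightarrow> int \<Rightarrow> nat \<Rightarrow> int \<times> (int \<Rightarrow> nat)" where
  "walk_state \<xi> x 0 = (x, (\<lambda>_. 0)(x := 1))"
| "walk_state \<xi> x (Suc n) =
     (let (p, c) = walk_state \<xi> x n;
          p' = (if \<xi> (p, c p) then p + 1 else p - 1)
      in (p', c(p' := c p' + 1)))"

definition walk :: "(int \<times> nat \<Rightarrow> bool) \<Rightarrow> int \<Rightarrow> nat \<Rightarrow> int" where
  "walk \<xi> x n = fst (walk_state \<xi> x n)"

definition cookie_law :: "(int \<Rightarrow> nat \<Rightarrow> real) \<Rightarrow> int \<Rightarrow> (nat \<Rightarrow> int) measure" where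
  "cookie_law \<omega> x = distr (coin_space \<omega>) (PiM UNIV (\<lambda>_. count_space UNIV)) (\<lambda>\<xi>. walk \<xi> x)"

definition hit :: "(nat \<Rightarrow> int) \<Rightarrow> int extended \<Rightarrow> enat" where
  "hit X k = (case k of Fin m \<Rightarrow> (if \<exists>n. X n = m then enat (LEAST n. X n = m) else \<infinity>)
                      | _ \<Rightarrow> \<infinity>)"

end

theory Submission
  imports Defs
begin

fun ups :: "(nat \<Rightarrow> bool) \<Rightarrow> nat \<Rightarrow> nat" where
  "ups u 0 = 0"
| "ups u (Suc k) = ups u k + (if u (Suc k) then 1 else 0)"

fun downs :: "(nat \<Rightarrow> bool) \<Rightarrow> nat \<Rightarrow> nat" where
  "downs u 0 = 0"
| "downs u (Suc k) = downs u k + (if u (Suc k) then 0 else 1)"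

lemma ups_mono: "k \<le> k' \<Longrightarrow> ups u k \<le> ups u k'"
  by (rule lift_Suc_mono_le[of "ups u"]) auto

lemma downs_mono: "k \<le> k' \<Longrightarrow> downs u k \<le> downs u k'"
  by (rule lift_Suc_mono_le[of "downs u"]) auto

lemma ups_le: "\<forall>i\<ge>1. u i \<longrightarrow> v i \<Longrightarrow> ups u k \<le> ups v k"
  by (induction k) auto

lemma downs_le: "\<forall>i\<ge>1. u i \<longrightarrow> v i \<Longrightarrow> downs v k \<le> downs u k"
  by (induction k) auto

lemma seqA:
  assumes "\<forall>i\<ge>1. u i \<longrightarrow> v i" "ups v k2 < ups u k1"
  shows "k2 < k1"
proof (rule ccontr)
  assume "\<not> k2 < k1"
  then have "ups u k1 \<le> ups v k1" "ups v k1 \<le> ups v k2"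
    using ups_le[OF assms(1)] ups_mono[of k1 k2] by auto
  then show False using assms(2) by simp
qed

lemma seqB:
  assumes "\<forall>i\<ge>1. u i \<longrightarrow> v i" "k2 = 0 \<or> v k2" "ups v k2 \<le> ups u k1"
  shows "k2 \<le> k1"
proof (rule ccontr)
  assume "\<not> k2 \<le> k1"
  then obtain k' where k': "k2 = Suc k'" "k1 \<le> k'" by (cases k2) auto
  then have "v k2" using assms(2) by simp
  then have "ups v k2 = ups v k' + 1" using k' by simp
  moreover have "ups u k1 \<le> ups v k1" "ups v k1 \<le> ups v k'"
    using ups_le[OF assms(1)] ups_mono[OF k'(2)] by auto
  ultimately show False using assms(3) by simp
qed

lemma seq_downs:
  assumes "\<forall>i\<ge>1. u i \<longrightarrow> v i" "k2 \<le> k1"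
  shows "downs v k2 \<le> downs u k1"
  using downs_mono[OF assms(2), of v] downs_le[OF assms(1), of k1] by simp

abbreviation cnt :: "(int \<times> nat \<Rightarrow> bool) \<Rightarrow> int \<Rightarrow> nat \<Rightarrow> int \<Rightarrow> nat" where
  "cnt \<xi> y n \<equiv> snd (walk_state \<xi> y n)"

definition dep :: "(int \<times> nat \<Rightarrow> bool) \<Rightarrow> int \<Rightarrow> nat \<Rightarrow> int \<Rightarrow> nat" where
  "dep \<xi> y n z = cnt \<xi> y n z - (if z = walk \<xi> y n then 1 else 0)"

definition UU :: "(int \<times> nat \<Rightarrow> bool) \<Rightarrow> int \<Rightarrow> nat \<Rightarrow> int \<Rightarrow> nat" where
  "UU \<xi> y n z = ups (\<lambda>i. \<xi> (z, i)) (dep \<xi> y n z)"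

definition DD :: "(int \<times> nat \<Rightarrow> bool) \<Rightarrow> int \<Rightarrow> nat \<Rightarrow> int \<Rightarrow> nat" where
  "DD \<xi> y n z = downs (\<lambda>i. \<xi> (z, i)) (dep \<xi> y n z)"

lemma walk_0[simp]: "walk \<xi> y 0 = y"
  by (simp add: walk_def)

lemma cnt_0: "cnt \<xi> y 0 = (\<lambda>_. 0)(y := 1)"
  by simp

lemma walk_Suc: "walk \<xi> y (Suc n) =
   (if \<xi> (walk \<xi> y n, cnt \<xi> y n (walk \<xi> y n)) then walk \<xi> y n + 1 else walk \<xi> y n - 1)"
  by (simp add: walk_def Let_def split: prod.splits)

lemma cnt_Suc: "cnt \<xi> y (Suc n) =
   (cnt \<xi> y n)(walk \<xi> y (Suc n) := cnt \<xi> y n (walk \<xi> y (Suc n)) + 1)"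
  by (simp add: walk_def Let_def split: prod.splits)

declare walk_state.simps(2)[simp del]

lemma walk_step: "\<bar>walk \<xi> y (Suc n) - walk \<xi> y n\<bar> = 1"
  by (simp add: walk_Suc)

lemma walk_Suc_ne: "walk \<xi> y (Suc n) \<noteq> walk \<xi> y n"
  by (simp add: walk_Suc)

lemma cnt_pos: "cnt \<xi> y n (walk \<xi> y n) \<ge> 1"
  by (cases n) (auto simp: cnt_Suc)

lemma cnt_unvisited: "(\<forall>k\<le>n. walk \<xi> y k \<noteq> z) \<Longrightarrow> cnt \<xi> y n z = 0"
proof (induction n)
  case 0 then show ?case by simp
next
  case (Suc n)
  then show ?case by (auto simp: cnt_Suc)
qed

lemma cnt_first_visit:
  assumes "walk \<xi> y (Suc n) = z" "\<forall>k\<le>n. walk \<xi> y k \<noteq> z"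
  shows "cnt \<xi> y (Suc n) z = 1"
  using assms cnt_unvisited[of n \<xi> y z] by (simp add: cnt_Suc)

lemma inv_I1: "z \<noteq> walk \<xi> y n \<Longrightarrow> cnt \<xi> y n z > 0 \<Longrightarrow> \<xi> (z, cnt \<xi> y n z) = (z < walk \<xi> y n)"
proof (induction n arbitrary: z)
  case 0 then show ?case by simp
next
  case (Suc n)
  define p where "p = walk \<xi> y n"
  define p' where "p' = walk \<xi> y (Suc n)"
  have pp': "p' = (if \<xi> (p, cnt \<xi> y n p) then p + 1 else p - 1)"
    unfolding p_def p'_def by (simp add: walk_Suc)
  have zp': "z \<noteq> p'" using Suc.prems p'_def by simp
  have c: "cnt \<xi> y (Suc n) z = cnt \<xi> y n z" using zp' by (simp add: cnt_Suc p'_def)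
  show ?case
  proof (cases "z = p")
    case True
    then show ?thesis using c pp' p'_def by auto
  next
    case False
    then have "\<xi> (z, cnt \<xi> y n z) = (z < p)" using Suc.IH[of z] Suc.prems c p_def by simp
    then show ?thesis using c pp' p'_def zp' False by auto
  qed
qed

lemma dep_Suc: "dep \<xi> y (Suc n) z = (if z = walk \<xi> y n then Suc (dep \<xi> y n z) else dep \<xi> y n z)"
  using cnt_pos[of \<xi> y n] walk_Suc_ne[of \<xi> y n]
  by (auto simp: dep_def cnt_Suc)

lemma coin_dep: "cnt \<xi> y n (walk \<xi> y n) = Suc (dep \<xi> y n (walk \<xi> y n))"
  using cnt_pos[of \<xi> y n] by (simp add: dep_def)

lemma dep_0: "dep \<xi> y 0 z = 0"
  by (simp add: dep_def)

lemma UU_Suc: "UU \<xi> y (Suc n) z = UU \<xi> y n z +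
   (if z = walk \<xi> y n \<and> \<xi> (walk \<xi> y n, cnt \<xi> y n (walk \<xi> y n)) then 1 else 0)"
  by (simp add: UU_def dep_Suc coin_dep)

lemma DD_Suc: "DD \<xi> y (Suc n) z = DD \<xi> y n z +
   (if z = walk \<xi> y n \<and> \<not> \<xi> (walk \<xi> y n, cnt \<xi> y n (walk \<xi> y n)) then 1 else 0)"
  by (simp add: DD_def dep_Suc coin_dep)

lemma flow: "int (UU \<xi> y n z) - int (DD \<xi> y n (z+1)) =
   (if y \<le> z \<and> z < walk \<xi> y n then 1 else 0) - (if walk \<xi> y n \<le> z \<and> z < y then 1 else 0)"
proof (induction n arbitrary: z)
  case 0 then show ?case by (simp add: UU_def DD_def dep_0)
next
  case (Suc n)
  define p where "p = walk \<xi> y n"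
  define b where "b = \<xi> (walk \<xi> y n, cnt \<xi> y n (walk \<xi> y n))"
  have w: "walk \<xi> y (Suc n) = (if b then p + 1 else p - 1)"
    unfolding p_def b_def by (simp add: walk_Suc)
  have u: "UU \<xi> y (Suc n) z = UU \<xi> y n z + (if z = p \<and> b then 1 else 0)"
    unfolding p_def b_def by (rule UU_Suc)
  have d: "DD \<xi> y (Suc n) (z+1) = DD \<xi> y n (z+1) + (if z + 1 = p \<and> \<not> b then 1 else 0)"
    unfolding p_def b_def by (rule DD_Suc)
  have ih: "int (UU \<xi> y n z) - int (DD \<xi> y n (z+1)) =
   (if y \<le> z \<and> z < p then 1 else 0) - (if p \<le> z \<and> z < y then 1 else 0)"
    using Suc.IH p_def by simp
  show ?case using u d ih w by auto
qed

lemma cnt_sum: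
  assumes "finite S" "\<forall>k\<le>n. walk \<xi> y k \<in> S"
  shows "(\<Sum>z\<in>S. cnt \<xi> y n z) = n + 1"
  using assms(2)
proof (induction n)
  case 0
  then have "y \<in> S" by auto
  then show ?case using assms(1) by (simp add: sum.delta)
next
  case (Suc n)
  define p' where "p' = walk \<xi> y (Suc n)"
  have p'S: "p' \<in> S" using Suc.prems p'_def by auto
  have "(\<Sum>z\<in>S. cnt \<xi> y (Suc n) z) = (\<Sum>z\<in>S. cnt \<xi> y n z + (if z = p' then 1 else 0))"
    by (rule sum.cong) (auto simp: cnt_Suc p'_def)
  also have "\<dots> = (\<Sum>z\<in>S. cnt \<xi> y n z) + 1"
    using p'S assms(1) by (simp add: sum.distrib)
  finally show ?case using Suc by simp
qed

lemma down_aux: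
  assumes mono: "\<forall>z i. i \<ge> 1 \<longrightarrow> \<xi>1 (z,i) \<longrightarrow> \<xi>2 (z,i)"
    and w1: "walk \<xi>1 y N = b"
    and c2b: "cnt \<xi>2 y n b = 0"
  shows "DD \<xi>2 y n (b - int k) \<le> DD \<xi>1 y N (b - int k) \<and>
         (0 < k \<longrightarrow> cnt \<xi>2 y n (b - int k) \<le> cnt \<xi>1 y N (b - int k))"
proof (induction k)
  case 0
  then show ?case using c2b by (simp add: DD_def dep_def)
next
  case (Suc k)
  define z where "z = b - int (Suc k)"
  have z1: "z + 1 = b - int k" unfolding z_def by simp
  have zb: "z < b" unfolding z_def by simp
  define p where "p = walk \<xi>2 y n"
  have ih: "DD \<xi>2 y n (z+1) \<le> DD \<xi>1 y N (z+1)" using Suc.IH z1 by simp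
  have f1: "int (UU \<xi>1 y N z) - int (DD \<xi>1 y N (z+1)) = (if y \<le> z then 1 else 0)"
    using flow[of \<xi>1 y N z] w1 zb by simp
  have f2: "int (UU \<xi>2 y n z) - int (DD \<xi>2 y n (z+1)) =
      (if y \<le> z \<and> z < p then 1 else 0) - (if p \<le> z \<and> z < y then 1 else 0)"
    using flow[of \<xi>2 y n z] p_def by simp
  have key: "int (UU \<xi>2 y n z) + (if p \<le> z then 1 else 0) \<le> int (UU \<xi>1 y N z)"
    using f1 f2 ih by (auto split: if_splits)
  have d1: "dep \<xi>1 y N z = cnt \<xi>1 y N z" using w1 zb by (simp add: dep_def)
  have mono': "\<forall>i\<ge>1. (\<lambda>i. \<xi>1 (z, i)) i \<longrightarrow> (\<lambda>i. \<xi>2 (z, i)) i" using mono by simp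
  have res: "dep \<xi>2 y n z \<le> dep \<xi>1 y N z \<and> cnt \<xi>2 y n z \<le> cnt \<xi>1 y N z"
  proof (cases "p \<le> z")
    case True
    then have "UU \<xi>2 y n z < UU \<xi>1 y N z" using key by simp
    then have "dep \<xi>2 y n z < dep \<xi>1 y N z"
      using seqA[OF mono'] by (simp add: UU_def)
    moreover have "cnt \<xi>2 y n z \<le> dep \<xi>2 y n z + 1" by (simp add: dep_def)  arith
    ultimately show ?thesis using d1 by simp
  next
    case False
    then have le: "UU \<xi>2 y n z \<le> UU \<xi>1 y N z" using key by simp
    have zp: "z \<noteq> p" using False by simp
    have d2: "dep \<xi>2 y n z = cnt \<xi>2 y n z" using zp p_def by (simp add: dep_def)
    have "cnt \<xi>2 y n z = 0 \<or> \<xi>2 (z, cnt \<xi>2 y n z)"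
      using inv_I1[of z \<xi>2 y n] zp p_def False by auto
    then have "cnt \<xi>2 y n z \<le> dep \<xi>1 y N z"
      using seqB[OF mono', of "cnt \<xi>2 y n z" "dep \<xi>1 y N z"] le d2 by (simp add: UU_def)
    then show ?thesis using d1 d2 by simp
  qed
  have "DD \<xi>2 y n z \<le> DD \<xi>1 y N z"
    using seq_downs[OF mono'] res by (simp add: DD_def)
  then show ?case using res z_def by simp
qed

lemma down:
  assumes mono: "\<forall>z i. i \<ge> 1 \<longrightarrow> \<xi>1 (z,i) \<longrightarrow> \<xi>2 (z,i)"
    and w1: "walk \<xi>1 y N = b"
    and c2b: "cnt \<xi>2 y n b = 0"
    and "z \<le> b"
  shows "DD \<xi>2 y n z \<le> DD \<xi>1 y N z \<and> (z < b \<longrightarrow> cnt \<xi>2 y n z \<le> cnt \<xi>1 y N z)"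
proof -
  have "z = b - int (nat (b - z))" using assms(4) by simp
  then show ?thesis using down_aux[OF mono w1 c2b, of "nat (b - z)"] assms(4)
    by (metis zero_less_nat_eq diff_gt_0_iff_gt order_le_less)
qed

lemma walk_between:
  assumes "\<forall>k\<le>n. walk \<xi> y k \<in> {a<..<b}" "walk \<xi> y (Suc n) \<notin> {a<..<b}"
  shows "walk \<xi> y (Suc n) = a \<or> walk \<xi> y (Suc n) = b"
  using assms(1)[rule_format, of n] assms(2) walk_step[of \<xi> y n] by auto

lemma core:
  assumes mono: "\<forall>z i. i \<ge> 1 \<longrightarrow> \<xi>1 (z,i) \<longrightarrow> \<xi>2 (z,i)"
    and ay: "a < y" and yb: "y < b"
    and w1: "walk \<xi>1 y N = b"
    and bef: "\<forall>n<N. a < walk \<xi>1 y n \<and> walk \<xi>1 y n < b"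
  shows "\<exists>m\<le>N. walk \<xi>2 y m = b \<and> (\<forall>n<m. a < walk \<xi>2 y n \<and> walk \<xi>2 y n < b)"
proof -
  have "N \<noteq> 0" using w1 yb by (cases N) auto
  then obtain N' where N': "N = Suc N'" by (cases N) auto
  have c1b: "cnt \<xi>1 y N b = 1"
  proof -
    have "\<forall>k\<le>N'. walk \<xi>1 y k \<noteq> b" using bef N' by (metis le_imp_less_Suc less_irrefl)
    then show ?thesis using cnt_first_visit[of \<xi>1 y N' b] w1 N' by simp
  qed
  have c1a: "cnt \<xi>1 y N a = 0"
    using cnt_unvisited[of N \<xi>1 y a] bef w1 ay yb by (metis le_neq_implies_less less_irrefl order_less_trans)
  have "\<forall>k\<le>N. walk \<xi>1 y k \<in> {a<..b}"
  proof (intro allI impI)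
    fix k assume "k \<le> N"
    then show "walk \<xi>1 y k \<in> {a<..b}" using bef w1 ay yb
      by (cases "k = N") (auto, metis le_neq_implies_less less_imp_le)
  qed
  then have "(\<Sum>z\<in>{a<..b}. cnt \<xi>1 y N z) = N + 1"
    using cnt_sum[of "{a<..b}" N \<xi>1 y] by simp
  moreover have "{a<..b} = insert b {a<..<b}" using ay yb by auto
  ultimately have sum1: "(\<Sum>z\<in>{a<..<b}. cnt \<xi>1 y N z) = N" using c1b by simp
  define Q where "Q n = (\<forall>k\<le>n. walk \<xi>2 y k \<in> {a<..<b})" for n
  have bound: "n + 1 \<le> N" if "Q n" for n
  proof -
    have c2b: "cnt \<xi>2 y n b = 0"
      using cnt_unvisited[of n \<xi>2 y b] that Q_def by auto
    have "n + 1 = (\<Sum>z\<in>{a<..<b}. cnt \<xi>2 y n z)"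
      using cnt_sum[of "{a<..<b}" n \<xi>2 y] that Q_def by simp
    also have "\<dots> \<le> (\<Sum>z\<in>{a<..<b}. cnt \<xi>1 y N z)"
      by (rule sum_mono) (use down[OF mono w1 c2b] in auto)
    finally show ?thesis using sum1 by simp
  qed
  have nQ: "\<not> Q N" using bound by fastforce
  define m where "m = (LEAST n. \<not> Q n)"
  have nQm: "\<not> Q m" unfolding m_def using nQ by (rule LeastI)
  have mN: "m \<le> N" unfolding m_def using nQ by (rule Least_le)
  have Q0: "Q 0" using ay yb by (simp add: Q_def)
  then have "m \<noteq> 0" using nQm by (metis gr0I)
  then obtain m' where m': "m = Suc m'" by (cases m) auto
  have Qm': "Q m'" using not_less_Least[of m' "\<lambda>n. \<not> Q n"] m' m_def by auto
  have out: "walk \<xi>2 y m \<notin> {a<..<b}"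
    using nQm Qm' m' unfolding Q_def by (metis le_Suc_eq)
  have ab: "walk \<xi>2 y m = a \<or> walk \<xi>2 y m = b"
    using walk_between[of m' \<xi>2 y a b] Qm' out m' Q_def by simp
  have "walk \<xi>2 y m \<noteq> a"
  proof
    assume wa: "walk \<xi>2 y m = a"
    have c2b: "cnt \<xi>2 y m b = 0"
      using cnt_unvisited[of m \<xi>2 y b] Qm' Q_def m' wa ay yb by (auto simp: le_Suc_eq)
    have "DD \<xi>2 y m (a+1) \<le> DD \<xi>1 y N (a+1)"
      using down[OF mono w1 c2b, of "a+1"] ay yb by simp
    moreover have "UU \<xi>1 y N a = 0"
      using c1a w1 ay yb by (simp add: UU_def dep_def)
    moreover have "int (UU \<xi>1 y N a) - int (DD \<xi>1 y N (a+1)) = 0"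
      using flow[of \<xi>1 y N a] w1 ay yb by simp
    moreover have "int (UU \<xi>2 y m a) - int (DD \<xi>2 y m (a+1)) = -1"
      using flow[of \<xi>2 y m a] wa ay by simp
    ultimately show False by simp
  qed
  then have "walk \<xi>2 y m = b" using ab by simp
  moreover have "\<forall>n<m. a < walk \<xi>2 y n \<and> walk \<xi>2 y n < b"
    using Qm' m' Q_def by auto
  ultimately show ?thesis using mN by blast
qed

definition refl_env :: "(int \<times> nat \<Rightarrow> bool) \<Rightarrow> int \<times> nat \<Rightarrow> bool" where
  "refl_env \<xi> = (\<lambda>(z, i). \<not> \<xi> (-z, i))"

lemma walk_refl:
  "walk (refl_env \<xi>) (-y) n = - walk \<xi> y n \<and> cnt (refl_env \<xi>) (-y) n = (\<lambda>z. cnt \<xi> y n (-z))"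
proof (induction n)
  case 0
  then show ?case by (auto simp: fun_eq_iff)
next
  case (Suc n)
  have w: "walk (refl_env \<xi>) (-y) (Suc n) = - walk \<xi> y (Suc n)"
    using Suc by (simp add: walk_Suc refl_env_def)
  show ?case
    using Suc w by (auto simp: cnt_Suc fun_eq_iff)
qed

lemma mirror:
  assumes mono: "\<forall>z i. i \<ge> 1 \<longrightarrow> \<xi>1 (z,i) \<longrightarrow> \<xi>2 (z,i)"
    and ay: "a < y" and yb: "y < b"
    and w2: "walk \<xi>2 y N = a"
    and bef: "\<forall>n<N. a < walk \<xi>2 y n \<and> walk \<xi>2 y n < b"
  shows "\<exists>m\<le>N. walk \<xi>1 y m = a \<and> (\<forall>n<m. a < walk \<xi>1 y n \<and> walk \<xi>1 y n < b)"
proof -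
  have mono': "\<forall>z i. i \<ge> 1 \<longrightarrow> refl_env \<xi>2 (z,i) \<longrightarrow> refl_env \<xi>1 (z,i)"
    using mono by (auto simp: refl_env_def)
  have "\<exists>m\<le>N. walk (refl_env \<xi>1) (-y) m = -a \<and>
      (\<forall>n<m. -b < walk (refl_env \<xi>1) (-y) n \<and> walk (refl_env \<xi>1) (-y) n < -a)"
    using core[OF mono', of "-b" "-y" "-a" N] ay yb w2 bef walk_refl by simp
  then show ?thesis using walk_refl by auto
qed

lemma walk_range: "\<bar>walk \<xi> y n - y\<bar> \<le> int n"
proof (induction n)
  case 0 then show ?case by simp
next
  case (Suc n) then show ?case using walk_step[of \<xi> y n] by linarith
qed

lemma ivt_below: "y < b \<Longrightarrow> \<forall>k\<le>n. walk \<xi> y k \<noteq> b \<Longrightarrow> walk \<xi> y n < b"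
proof (induction n)
  case 0 then show ?case by simp
next
  case (Suc n)
  then have "walk \<xi> y n < b" by auto
  moreover have "walk \<xi> y (Suc n) \<noteq> b" using Suc.prems by auto
  ultimately show ?case using walk_step[of \<xi> y n] by linarith
qed

lemma ivt_above: "a < y \<Longrightarrow> \<forall>k\<le>n. walk \<xi> y k \<noteq> a \<Longrightarrow> a < walk \<xi> y n"
proof (induction n)
  case 0 then show ?case by simp
next
  case (Suc n)
  then have "a < walk \<xi> y n" by auto
  moreover have "walk \<xi> y (Suc n) \<noteq> a" using Suc.prems by auto
  ultimately show ?case using walk_step[of \<xi> y n] by linarith
qed

lemma hit_le: "hit X (Fin m) \<le> enat n \<longleftrightarrow> (\<exists>k\<le>n. X k = m)"
proof
  assume h: "hit X (Fin m) \<le> enat n"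
  then have ex: "\<exists>k. X k = m" by (auto simp: hit_def split: if_splits)
  then have "(LEAST k. X k = m) \<le> n" using h by (simp add: hit_def)
  moreover have "X (LEAST k. X k = m) = m" using ex by (rule LeastI_ex)
  ultimately show "\<exists>k\<le>n. X k = m" by blast
next
  assume "\<exists>k\<le>n. X k = m"
  then obtain k where k: "k \<le> n" "X k = m" by blast
  then have "(LEAST k. X k = m) \<le> k" by (simp add: Least_le)
  then show "hit X (Fin m) \<le> enat n" using k by (auto simp: hit_def)
qed

lemma hit_ge: "enat n \<le> hit X (Fin m) \<longleftrightarrow> (\<forall>k<n. X k \<noteq> m)"
proof
  assume h: "enat n \<le> hit X (Fin m)"
  show "\<forall>k<n. X k \<noteq> m"
  proof (intro allI impI notI)
    fix k assume "k < n" "X k = m"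
    then have "hit X (Fin m) \<le> enat k" using hit_le by blast
    then show False using h \<open>k < n\<close> by (meson enat_ord_simps(2) leD order_trans)
  qed
next
  assume a: "\<forall>k<n. X k \<noteq> m"
  show "enat n \<le> hit X (Fin m)"
  proof (rule ccontr)
    assume "\<not> enat n \<le> hit X (Fin m)"
    then obtain j where j: "hit X (Fin m) = enat j" "j < n"
      by (cases "hit X (Fin m)") auto
    then have "\<exists>k\<le>j. X k = m" using hit_le[of X m j] by simp
    then obtain k where "k \<le> j" "X k = m" by blast
    moreover have "k < n" using \<open>k \<le> j\<close> j(2) by simp
    ultimately show False using a by blast
  qed
qed

lemma hit_inf: "hit X (Fin m) = \<infinity> \<longleftrightarrow> (\<forall>k. X k \<noteq> m)"
  by (auto simp: hit_def)

lemma hit_Pinf[simp]: "hit X Pinf = \<infinity>" and hit_Minf[simp]: "hit X Minf = \<infinity>"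
  by (auto simp: hit_def)

lemma path_event:
  fixes x z :: "int extended" and t :: enat
  assumes mono: "\<forall>z i. i \<ge> 1 \<longrightarrow> \<xi>1 (z,i) \<longrightarrow> \<xi>2 (z,i)"
    and xy: "x \<le> Fin y" and yz: "Fin y \<le> z"
    and E1: "hit (walk \<xi>1 y) z \<le> min (hit (walk \<xi>1 y) x) t"
  shows "hit (walk \<xi>2 y) z \<le> min (hit (walk \<xi>2 y) x) t"
proof -
  have hy1: "hit (walk \<xi>1 y) (Fin y) = 0"
    using hit_le[of "walk \<xi>1 y" y 0] by (simp flip: zero_enat_def)
  have hy2: "hit (walk \<xi>2 y) (Fin y) = 0"
    using hit_le[of "walk \<xi>2 y" y 0] by (simp flip: zero_enat_def)
  show ?thesis
  proof (cases z)
    case Minf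
    then show ?thesis using yz by simp
  next
    case Pinf
    then have h1: "hit (walk \<xi>1 y) x = \<infinity>" "t = \<infinity>" using E1 by (auto simp: min_def split: if_splits)
    have "hit (walk \<xi>2 y) x = \<infinity>"
    proof (cases x)
      case Minf then show ?thesis by simp
    next
      case Pinf then show ?thesis using xy by simp
    next
      case (Fin xa)
      then have "xa \<le> y" using xy by simp
      moreover have "xa \<noteq> y" using h1 hy1 Fin by (auto simp: zero_enat_def)
      ultimately have xay: "xa < y" by simp
      show ?thesis
      proof (rule ccontr)
        assume "hit (walk \<xi>2 y) x \<noteq> \<infinity>"
        then obtain m where m: "hit (walk \<xi>2 y) (Fin xa) = enat m" using Fin by auto
        then have "\<exists>k\<le>m. walk \<xi>2 y k = xa" using hit_le[of "walk \<xi>2 y" xa m] by simp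
        have bef: "\<forall>k<m. walk \<xi>2 y k \<noteq> xa" using hit_ge[of m "walk \<xi>2 y" xa] m by simp
        have wm: "walk \<xi>2 y m = xa"
        proof -
          obtain k where "k \<le> m" "walk \<xi>2 y k = xa" using \<open>\<exists>k\<le>m. walk \<xi>2 y k = xa\<close> by blast
          then show ?thesis using bef by (cases "k = m") auto
        qed
        have "\<forall>k<m. xa < walk \<xi>2 y k \<and> walk \<xi>2 y k < y + int m + 1"
        proof (intro allI impI conjI)
          fix k assume "k < m"
          then show "xa < walk \<xi>2 y k" using ivt_above[of xa y k \<xi>2] xay bef by auto
          show "walk \<xi>2 y k < y + int m + 1" using walk_range[of \<xi>2 y k] \<open>k < m\<close> by linarith
        qed
        then obtain m' where "walk \<xi>1 y m' = xa"
          using mirror[OF mono xay, of "y + int m + 1" m] wm by auto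
        then have "hit (walk \<xi>1 y) (Fin xa) \<le> enat m'" using hit_le by blast
        then show False using h1 Fin by simp
      qed
    qed
    then show ?thesis using Pinf h1 by simp
  next
    case (Fin zb)
    then have yzb: "y \<le> zb" using yz by simp
    show ?thesis
    proof (cases "zb = y")
      case True
      then show ?thesis using Fin hy2 by simp
    next
      case False
      then have yzb: "y < zb" using yzb by simp
      show ?thesis
      proof (cases "hit (walk \<xi>1 y) z")
        case (enat N)
        have le1: "enat N \<le> t" "enat N \<le> hit (walk \<xi>1 y) x" using E1 enat by auto
        have bef1: "\<forall>k<N. walk \<xi>1 y k \<noteq> zb" using hit_ge[of N "walk \<xi>1 y" zb] enat Fin by simp
        have wN: "walk \<xi>1 y N = zb"
        proof -
          obtain k where "k \<le> N" "walk \<xi>1 y k = zb" using hit_le[of "walk \<xi>1 y" zb N] enat Fin by auto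
          then show ?thesis using bef1 by (cases "k = N") auto
        qed
        have below1: "\<forall>k<N. walk \<xi>1 y k < zb"
          using ivt_below[of y zb _ \<xi>1] yzb bef1 by auto
        obtain a where ay: "a < y" and above1: "\<forall>k<N. a < walk \<xi>1 y k"
          and xa: "x = Minf \<or> x = Fin a"
        proof (cases x)
          case Minf
          have "\<forall>k<N. y - int N - 1 < walk \<xi>1 y k"
            using walk_range[of \<xi>1 y] by (smt (verit) of_nat_less_iff)
          then show ?thesis using that[of "y - int N - 1"] Minf by simp
        next
          case Pinf then show ?thesis using xy by simp
        next
          case (Fin xa)
          then have "xa \<le> y" using xy by simp
          moreover have "xa \<noteq> y"
          proof
            assume "xa = y"
            then have "N = 0" using le1(2) Fin hy1 by (simp add: zero_enat_def)
            then show False using wN yzb by simp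
          qed
          ultimately have xay: "xa < y" by simp
          have "\<forall>k<N. walk \<xi>1 y k \<noteq> xa" using hit_ge[of N "walk \<xi>1 y" xa] le1(2) Fin by simp
          then have "\<forall>k<N. xa < walk \<xi>1 y k" using ivt_above[of xa y _ \<xi>1] xay by auto
          then show ?thesis using that[of xa] xay Fin by simp
        qed
        obtain m where m: "m \<le> N" "walk \<xi>2 y m = zb"
          and bm: "\<forall>k<m. a < walk \<xi>2 y k \<and> walk \<xi>2 y k < zb"
          using core[OF mono ay yzb wN] above1 below1 by blast
        have h2: "hit (walk \<xi>2 y) z \<le> enat m" using hit_le[of "walk \<xi>2 y" zb m] m Fin by auto
        have "enat m \<le> hit (walk \<xi>2 y) x"
          using xa
        proof
          assume "x = Minf" then show ?thesis by simp
        next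
          assume "x = Fin a"
          then show ?thesis using hit_ge[of m "walk \<xi>2 y" a] bm by auto
        qed
        moreover have "enat m \<le> t" using le1(1) m(1) by (meson enat_ord_simps(1) order_trans)
        ultimately show ?thesis using h2 by (meson min.boundedI order_trans)
      next
        case infinity
        then have h1: "hit (walk \<xi>1 y) x = \<infinity>" "t = \<infinity>" using E1 by (auto simp: min_def split: if_splits)
        have "hit (walk \<xi>2 y) z \<le> hit (walk \<xi>2 y) x"
        proof (cases x)
          case Minf then show ?thesis by simp
        next
          case Pinf then show ?thesis using xy by simp
        next
          case (Fin xa)
          then have "xa \<le> y" using xy by simp
          moreover have "xa \<noteq> y" using h1 hy1 Fin by (auto simp: zero_enat_def)
          ultimately have xay: "xa < y" by simp
          show ?thesis
          proof (rule ccontr)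
            assume nle: "\<not> hit (walk \<xi>2 y) z \<le> hit (walk \<xi>2 y) x"
            then obtain m where m: "hit (walk \<xi>2 y) (Fin xa) = enat m" using Fin
              by (cases "hit (walk \<xi>2 y) x") auto
            have bef: "\<forall>k<m. walk \<xi>2 y k \<noteq> xa" using hit_ge[of m "walk \<xi>2 y" xa] m by simp
            have wm: "walk \<xi>2 y m = xa"
            proof -
              obtain k where "k \<le> m" "walk \<xi>2 y k = xa" using hit_le[of "walk \<xi>2 y" xa m] m by auto
              then show ?thesis using bef by (cases "k = m") auto
            qed
            have "enat (Suc m) \<le> hit (walk \<xi>2 y) (Fin zb)"
              using nle m Fin \<open>z = Fin zb\<close> by (simp add: Suc_ile_eq not_le)
            then have befz: "\<forall>k<Suc m. walk \<xi>2 y k \<noteq> zb" using hit_ge by blast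
            have "\<forall>k<m. xa < walk \<xi>2 y k \<and> walk \<xi>2 y k < zb"
            proof (intro allI impI conjI)
              fix k assume "k < m"
              then show "xa < walk \<xi>2 y k" using ivt_above[of xa y k \<xi>2] xay bef by auto
              show "walk \<xi>2 y k < zb" using ivt_below[of y zb k \<xi>2] yzb befz \<open>k < m\<close> by auto
            qed
            then obtain m' where "walk \<xi>1 y m' = xa"
              using mirror[OF mono xay, of zb m] wm xay yzb by auto
            then have "hit (walk \<xi>1 y) (Fin xa) \<le> enat m'" using hit_le by blast
            then show False using h1 Fin by simp
          qed
        qed
        then show ?thesis using h1 by simp
      qed
    qed
  qed
qed

definition mcpl :: "real \<Rightarrow> real \<Rightarrow> (bool \<times> bool) pmf" where
  "mcpl p q = bind_pmf (bernoulli_pmf q)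
     (\<lambda>b. if b then map_pmf (\<lambda>a. (a, True)) (bernoulli_pmf (p / q)) else return_pmf (False, False))"

definition cpl :: "real \<Rightarrow> real \<Rightarrow> (bool \<times> bool) pmf" where
  "cpl p q = (if 0 \<le> p \<and> p \<le> q \<and> q \<le> 1 then mcpl p q
              else pair_pmf (bernoulli_pmf p) (bernoulli_pmf q))"

lemma mcpl_fst:
  assumes "0 \<le> p" "p \<le> q" "q \<le> 1"
  shows "map_pmf fst (mcpl p q) = bernoulli_pmf p"
proof (rule pmf_eqI)
  fix c :: bool
  have pq: "0 \<le> p / q" "p / q \<le> 1" using assms
    by (auto simp: divide_le_eq_1)
  have e: "map_pmf fst (mcpl p q) =
     bind_pmf (bernoulli_pmf q) (\<lambda>b. if b then bernoulli_pmf (p / q) else return_pmf False)"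
    unfolding mcpl_def map_bind_pmf
    by (intro bind_pmf_cong refl) (auto simp: pmf.map_comp o_def)
  have q0: "q * (p / q) = p" using assms by (cases "q = 0") auto
  show "pmf (map_pmf fst (mcpl p q)) c = pmf (bernoulli_pmf p) c"
    unfolding e pmf_bind using assms pq q0
    by (cases c) (auto simp: algebra_simps)
qed

lemma mcpl_snd:
  assumes "0 \<le> p" "p \<le> q" "q \<le> 1"
  shows "map_pmf snd (mcpl p q) = bernoulli_pmf q"
proof -
  have "map_pmf snd (mcpl p q) = bind_pmf (bernoulli_pmf q) return_pmf"
    unfolding mcpl_def map_bind_pmf
    by (intro bind_pmf_cong refl) (auto simp: pmf.map_comp o_def)
  then show ?thesis by (simp add: bind_return_pmf')
qed

lemma cpl_fst: "map_pmf fst (cpl p q) = bernoulli_pmf p"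
  by (simp add: cpl_def mcpl_fst map_fst_pair_pmf)

lemma cpl_snd: "map_pmf snd (cpl p q) = bernoulli_pmf q"
  by (simp add: cpl_def mcpl_snd map_snd_pair_pmf)

lemma cpl_mono:
  assumes "0 \<le> p" "p \<le> q" "q \<le> 1" "ab \<in> set_pmf (cpl p q)"
  shows "fst ab \<longrightarrow> snd ab"
  using assms by (auto simp: cpl_def mcpl_def split: if_splits)

lemma distr_PiM_map_pmf:
  fixes K :: "'i \<Rightarrow> 'a pmf" and f :: "'a \<Rightarrow> 'b"
  shows "distr (PiM UNIV (\<lambda>k. measure_pmf (K k))) (PiM UNIV (\<lambda>k. count_space UNIV)) (\<lambda>\<eta> k. f (\<eta> k))
       = PiM UNIV (\<lambda>k. measure_pmf (map_pmf f (K k)))"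
proof (rule measure_eqI_PiM_infinite[symmetric, where M = "\<lambda>k. measure_pmf (map_pmf f (K k))"])
  have meas: "(\<lambda>\<eta> k. f (\<eta> k)) \<in> measurable (PiM UNIV (\<lambda>k. measure_pmf (K k))) (PiM UNIV (\<lambda>k. count_space UNIV))"
  proof (rule measurable_PiM_single')
    fix k :: 'i
    have "(\<lambda>\<omega>. \<omega> k) \<in> measurable (PiM UNIV (\<lambda>k. measure_pmf (K k))) (measure_pmf (K k))"
      by (rule measurable_component_singleton) simp
    moreover have "f \<in> measurable (measure_pmf (K k)) (count_space UNIV)" by simp
    ultimately show "(\<lambda>\<omega>. f (\<omega> k)) \<in> measurable (PiM UNIV (\<lambda>k. measure_pmf (K k))) (count_space UNIV)"
      by (rule measurable_compose[where f = "\<lambda>\<omega>. \<omega> k"])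
  qed (auto simp: space_PiM)
  show "sets (PiM UNIV (\<lambda>k. measure_pmf (map_pmf f (K k)))) = sets (PiM UNIV (\<lambda>k. measure_pmf (map_pmf f (K k))))"
    by simp
  show "sets (distr (PiM UNIV (\<lambda>k. measure_pmf (K k))) (PiM UNIV (\<lambda>k. count_space UNIV)) (\<lambda>\<eta> k. f (\<eta> k)))
     = sets (PiM UNIV (\<lambda>k. measure_pmf (map_pmf f (K k))))"
    by (simp add: sets_PiM_cong)
  show "finite_measure (PiM UNIV (\<lambda>k. measure_pmf (map_pmf f (K k))))"
  proof -
    have "prob_space (PiM UNIV (\<lambda>k. measure_pmf (map_pmf f (K k))))"
      by (intro prob_space_PiM prob_space_measure_pmf)
    then show ?thesis by (simp add: prob_space_def)
  qed
  fix A J assume J: "finite J" "J \<subseteq> (UNIV :: 'i set)"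
    and A: "\<And>i. i \<in> J \<Longrightarrow> A i \<in> sets (measure_pmf (map_pmf f (K i)))"
  let ?X = "prod_emb UNIV (\<lambda>k. measure_pmf (map_pmf f (K k))) J (Pi\<^sub>E J A)"
  have X: "?X \<in> sets (PiM UNIV (\<lambda>k. count_space UNIV))"
  proof -
    have "?X \<in> sets (PiM UNIV (\<lambda>k. measure_pmf (map_pmf f (K k))))"
      using J by (intro sets_PiM_I) auto
    moreover have "sets (PiM UNIV (\<lambda>k. measure_pmf (map_pmf f (K k)))) = sets (PiM UNIV (\<lambda>k. count_space UNIV))"
      by (rule sets_PiM_cong) auto
    ultimately show ?thesis by simp
  qed
  have pre: "(\<lambda>\<eta> k. f (\<eta> k)) -` ?X \<inter> space (PiM UNIV (\<lambda>k. measure_pmf (K k)))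
      = prod_emb UNIV (\<lambda>k. measure_pmf (K k)) J (Pi\<^sub>E J (\<lambda>j. f -` A j))"
    by (auto simp: prod_emb_def space_PiM PiE_iff)
  have "emeasure (PiM UNIV (\<lambda>k. measure_pmf (map_pmf f (K k)))) ?X = (\<Prod>j\<in>J. emeasure (map_pmf f (K j)) (A j))"
    using J by (intro emeasure_PiM_emb) (auto intro: prob_space_measure_pmf)
  also have "\<dots> = (\<Prod>j\<in>J. emeasure (K j) (f -` A j))" by simp
  also have "\<dots> = emeasure (PiM UNIV (\<lambda>k. measure_pmf (K k))) (prod_emb UNIV (\<lambda>k. measure_pmf (K k)) J (Pi\<^sub>E J (\<lambda>j. f -` A j)))"
    using J by (intro emeasure_PiM_emb[symmetric]) (auto intro: prob_space_measure_pmf)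
  also have "\<dots> = emeasure (distr (PiM UNIV (\<lambda>k. measure_pmf (K k))) (PiM UNIV (\<lambda>k. count_space UNIV)) (\<lambda>\<eta> k. f (\<eta> k))) ?X"
    using meas X by (simp add: emeasure_distr pre)
  finally show "emeasure (PiM UNIV (\<lambda>k. measure_pmf (map_pmf f (K k)))) ?X =
    emeasure (distr (PiM UNIV (\<lambda>k. measure_pmf (K k))) (PiM UNIV (\<lambda>k. count_space UNIV)) (\<lambda>\<eta> k. f (\<eta> k))) ?X" .
qed

lemma meas_h:
  "f \<in> measurable M (count_space UNIV) \<Longrightarrow> (\<lambda>x. h (f x)) \<in> measurable M (count_space UNIV)"
  by (erule measurable_compose) simp

lemma meas_pair:
  fixes f :: "'a \<Rightarrow> 'b::countable" and g :: "'a \<Rightarrow> 'c::countable"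
  assumes "f \<in> measurable M (count_space UNIV)" "g \<in> measurable M (count_space UNIV)"
  shows "(\<lambda>x. (f x, g x)) \<in> measurable M (count_space UNIV)"
proof -
  have "(\<lambda>x. (f x, g x)) \<in> measurable M (count_space UNIV \<Otimes>\<^sub>M count_space UNIV)"
    using assms by (rule measurable_Pair)
  moreover have "count_space (UNIV::'b set) \<Otimes>\<^sub>M count_space (UNIV::'c set) = count_space UNIV"
    by (simp add: pair_measure_countable)
  ultimately show ?thesis by simp
qed

lemma meas_h2:
  fixes f :: "'a \<Rightarrow> 'b::countable" and g :: "'a \<Rightarrow> 'c::countable"
  assumes "f \<in> measurable M (count_space UNIV)" "g \<in> measurable M (count_space UNIV)"
  shows "(\<lambda>x. h (f x) (g x)) \<in> measurable M (count_space UNIV)"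
  using meas_h[OF meas_pair[OF assms], of "\<lambda>(a,b). h a b"] by simp

lemma walk_meas_n:
  assumes comp: "\<And>k. (\<lambda>\<xi>. \<xi> k) \<in> measurable M (count_space UNIV)"
  shows "(\<lambda>\<xi>. walk \<xi> y n) \<in> measurable M (count_space UNIV) \<and>
         (\<forall>z. (\<lambda>\<xi>. cnt \<xi> y n z) \<in> measurable M (count_space UNIV))"
proof (induction n)
  case 0
  show ?case by simp
next
  case (Suc n)
  have P: "(\<lambda>\<xi>. walk \<xi> y n) \<in> measurable M (count_space UNIV)" using Suc by simp
  have C: "\<And>z. (\<lambda>\<xi>. cnt \<xi> y n z) \<in> measurable M (count_space UNIV)" using Suc by simp
  have inner: "(\<lambda>\<xi>. \<xi> (p, cnt \<xi> y n p)) \<in> measurable M (count_space UNIV)" for p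
    by (rule measurable_compose_countable'[where f = "\<lambda>i \<xi>. \<xi> (p, i)" and I = UNIV])
       (auto intro: comp C)
  have coin: "(\<lambda>\<xi>. \<xi> (walk \<xi> y n, cnt \<xi> y n (walk \<xi> y n))) \<in> measurable M (count_space UNIV)"
    by (rule measurable_compose_countable'[where f = "\<lambda>p \<xi>. \<xi> (p, cnt \<xi> y n p)" and I = UNIV])
       (auto intro: inner P)
  have W: "(\<lambda>\<xi>. walk \<xi> y (Suc n)) \<in> measurable M (count_space UNIV)"
    using meas_h2[OF coin P, of "\<lambda>b p. if b then p + 1 else p - 1"] by (simp add: walk_Suc)
  have "(\<lambda>\<xi>. cnt \<xi> y (Suc n) z) \<in> measurable M (count_space UNIV)" for z
  proof -
    have "(\<lambda>\<xi>. cnt \<xi> y (Suc n) z) = (\<lambda>\<xi>. if z = walk \<xi> y (Suc n) then cnt \<xi> y n z + 1 else cnt \<xi> y n z)"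
      by (auto simp: cnt_Suc fun_eq_iff)
    then show ?thesis
      using meas_h2[OF W C[of z], of "\<lambda>p c. if z = p then c + 1 else c"] by simp
  qed
  then show ?case using W by simp
qed

lemma walk_meas:
  assumes comp: "\<And>k. (\<lambda>\<xi>. \<xi> k) \<in> measurable M (count_space UNIV)"
  shows "(\<lambda>\<xi>. walk \<xi> y) \<in> measurable M (PiM UNIV (\<lambda>_. count_space UNIV))"
  by (rule measurable_PiM_single') (use walk_meas_n[OF comp] in auto)

lemma comp_meas_PiM:
  "(\<lambda>\<xi>. \<xi> k) \<in> measurable (PiM UNIV (\<lambda>k. measure_pmf (K k))) (count_space UNIV)"
proof -
  have "(\<lambda>\<omega>. \<omega> k) \<in> measurable (PiM UNIV (\<lambda>k. measure_pmf (K k))) (measure_pmf (K k))"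
    by (rule measurable_component_singleton) simp
  then show ?thesis by simp
qed

lemma comp_meas_PiM':
  "(\<lambda>\<xi>. \<xi> k) \<in> measurable (PiM UNIV (\<lambda>k. count_space UNIV)) (count_space UNIV)"
  by (rule measurable_component_singleton) simp

lemma map_meas:
  "(\<lambda>\<eta> k. f (\<eta> k)) \<in> measurable (PiM UNIV (\<lambda>k. measure_pmf (K k))) (PiM UNIV (\<lambda>k. count_space UNIV))"
proof (rule measurable_PiM_single')
  fix k
  show "(\<lambda>\<omega>. f (\<omega> k)) \<in> measurable (PiM UNIV (\<lambda>k. measure_pmf (K k))) (count_space UNIV)"
    using meas_h[OF comp_meas_PiM] .
qed (auto simp: space_PiM)

theorem mainTheorem15:
  fixes \<omega>1 \<omega>2 :: "int \<Rightarrow> nat \<Rightarrow> real" and x z :: "int extended" and y :: int and t :: enat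
  assumes "\<omega>1 \<in> Omega_plus" and "\<omega>2 \<in> Omega_plus"
    and "\<forall>w. \<forall>i\<ge>1. \<omega>1 w i \<le> \<omega>2 w i"
    and "x \<le> Fin y" and "Fin y \<le> z"
  shows "measure (cookie_law \<omega>1 y) {X \<in> space (cookie_law \<omega>1 y). hit X z \<le> min (hit X x) t}
       \<le> measure (cookie_law \<omega>2 y) {X \<in> space (cookie_law \<omega>2 y). hit X z \<le> min (hit X x) t}"
proof -
  let ?S = "PiM UNIV (\<lambda>_::nat. count_space (UNIV::int set))"
  let ?B = "PiM UNIV (\<lambda>_::int \<times> nat. count_space (UNIV::bool set))"
  define E where "E = {X \<in> space ?S. hit X z \<le> min (hit X x) t}"
  have spc: "space (cookie_law \<omega> y) = space ?S" for \<omega> by (simp add: cookie_law_def)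
  have setsc: "sets (cookie_law \<omega> y) = sets ?S" for \<omega> by (simp add: cookie_law_def)
  have eqE: "{X \<in> space (cookie_law \<omega> y). hit X z \<le> min (hit X x) t} = E" for \<omega>
    by (simp add: spc E_def)
  show ?thesis
  proof (cases "E \<in> sets ?S")
    case False
    then show ?thesis unfolding eqE using setsc by (simp add: measure_notin_sets)
  next
    case True
    define A where "A = {\<xi> :: int \<times> nat \<Rightarrow> bool. walk \<xi> y \<in> E}"
    have spB: "space ?B = UNIV" by (simp add: space_PiM)
    have A_sets: "A \<in> sets ?B"
    proof -
      have "(\<lambda>\<xi>. walk \<xi> y) -` E \<inter> space ?B \<in> sets ?B"
        using walk_meas[OF comp_meas_PiM', of y] True by (rule measurable_sets)
      then show ?thesis by (simp add: spB A_def vimage_def)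
    qed
    define K where "K = (\<lambda>(w, i). cpl (\<omega>1 w i) (\<omega>2 w i))"
    let ?C = "PiM UNIV (\<lambda>k. measure_pmf (K k))"
    have spC: "space ?C = UNIV" by (simp add: space_PiM)
    have lawj: "measure (cookie_law \<omega> y) E = measure (coin_space \<omega>) A" for \<omega>
    proof -
      have cm: "(\<lambda>\<xi>. \<xi> k) \<in> measurable (coin_space \<omega>) (count_space UNIV)" for k
        unfolding coin_space_def
      proof -
        have "(\<lambda>\<xi>. \<xi> k) \<in> measurable (PiM UNIV (\<lambda>(z, i). measure_pmf (bernoulli_pmf (\<omega> z i)))) ((\<lambda>(z, i). measure_pmf (bernoulli_pmf (\<omega> z i))) k)"
          by (rule measurable_component_singleton) simp
        then show "(\<lambda>\<xi>. \<xi> k) \<in> measurable (PiM UNIV (\<lambda>(z, i). measure_pmf (bernoulli_pmf (\<omega> z i)))) (count_space UNIV)"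
          by (simp add: case_prod_beta)
      qed
      have "measure (cookie_law \<omega> y) E = measure (coin_space \<omega>) ((\<lambda>\<xi>. walk \<xi> y) -` E \<inter> space (coin_space \<omega>))"
        unfolding cookie_law_def using walk_meas[OF cm] True by (rule measure_distr)
      moreover have "space (coin_space \<omega>) = UNIV" by (auto simp: coin_space_def space_PiM split: prod.splits)
      ultimately show ?thesis by (simp add: A_def vimage_def)
    qed
    have coin1: "coin_space \<omega>1 = distr ?C ?B (\<lambda>\<eta> k. fst (\<eta> k))"
      unfolding distr_PiM_map_pmf coin_space_def
      by (rule arg_cong[where f = "PiM UNIV"]) (auto simp: K_def cpl_fst fun_eq_iff)
    have coin2: "coin_space \<omega>2 = distr ?C ?B (\<lambda>\<eta> k. snd (\<eta> k))"
      unfolding distr_PiM_map_pmf coin_space_def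
      by (rule arg_cong[where f = "PiM UNIV"]) (auto simp: K_def cpl_snd fun_eq_iff)
    have m1: "measure (coin_space \<omega>1) A = measure ?C {\<eta>. walk (\<lambda>k. fst (\<eta> k)) y \<in> E}"
      unfolding coin1 using map_meas A_sets by (subst measure_distr) (auto simp: spC A_def vimage_def)
    have m2: "measure (coin_space \<omega>2) A = measure ?C {\<eta>. walk (\<lambda>k. snd (\<eta> k)) y \<in> E}"
      unfolding coin2 using map_meas A_sets by (subst measure_distr) (auto simp: spC A_def vimage_def)
    have A2_sets: "{\<eta>. walk (\<lambda>k. snd (\<eta> k)) y \<in> E} \<in> sets ?C"
    proof -
      have "(\<lambda>\<eta> k. snd (\<eta> k)) -` A \<inter> space ?C \<in> sets ?C"
        using map_meas A_sets by (rule measurable_sets)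
      then show ?thesis by (simp add: spC A_def vimage_def)
    qed
    have AE_mono: "AE \<eta> in ?C. \<forall>w i. i \<ge> 1 \<longrightarrow> fst (\<eta> (w, i)) \<longrightarrow> snd (\<eta> (w, i))"
    proof -
      have "AE \<eta> in ?C. \<forall>k. snd k \<ge> 1 \<longrightarrow> fst (\<eta> k) \<longrightarrow> snd (\<eta> k)"
      proof (subst AE_all_countable, intro allI)
        fix k :: "int \<times> nat"
        show "AE \<eta> in ?C. snd k \<ge> 1 \<longrightarrow> fst (\<eta> k) \<longrightarrow> snd (\<eta> k)"
        proof (cases "snd k \<ge> 1")
          case False then show ?thesis by simp
        next
          case True
          obtain w i where k: "k = (w, i)" by (cases k)
          have "1/2 \<le> \<omega>1 w i" "\<omega>1 w i \<le> \<omega>2 w i" "\<omega>2 w i \<le> 1"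
            using assms(1,2,3) True k by (auto simp: Omega_plus_def)
          then have "AE ab in measure_pmf (K k). fst ab \<longrightarrow> snd ab"
            unfolding AE_measure_pmf_iff K_def k
          proof (intro ballI)
            fix ab assume "ab \<in> set_pmf ((\<lambda>(w, i). cpl (\<omega>1 w i) (\<omega>2 w i)) (w, i))"
            then show "fst ab \<longrightarrow> snd ab"
              using cpl_mono[of "\<omega>1 w i" "\<omega>2 w i" ab] \<open>1/2 \<le> \<omega>1 w i\<close> \<open>\<omega>1 w i \<le> \<omega>2 w i\<close> \<open>\<omega>2 w i \<le> 1\<close>
              by simp
          qed
          then have "AE \<eta> in ?C. fst (\<eta> k) \<longrightarrow> snd (\<eta> k)"
            by (rule AE_PiM_component[rotated 2]) (auto intro: prob_space_measure_pmf)
          then show ?thesis by simp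
        qed
      qed
      then show ?thesis by auto
    qed
    interpret C: prob_space ?C by (intro prob_space_PiM prob_space_measure_pmf)
    have "measure ?C {\<eta>. walk (\<lambda>k. fst (\<eta> k)) y \<in> E} \<le> measure ?C {\<eta>. walk (\<lambda>k. snd (\<eta> k)) y \<in> E}"
    proof (rule C.finite_measure_mono_AE[OF _ A2_sets])
      show "AE \<eta> in ?C. \<eta> \<in> {\<eta>. walk (\<lambda>k. fst (\<eta> k)) y \<in> E} \<longrightarrow> \<eta> \<in> {\<eta>. walk (\<lambda>k. snd (\<eta> k)) y \<in> E}"
        using AE_mono
      proof eventually_elim
        case (elim \<eta>)
        show ?case
        proof
          assume "\<eta> \<in> {\<eta>. walk (\<lambda>k. fst (\<eta> k)) y \<in> E}"
          then have "hit (walk (\<lambda>k. fst (\<eta> k)) y) z \<le> min (hit (walk (\<lambda>k. fst (\<eta> k)) y) x) t"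
            by (simp add: E_def)
          then have "hit (walk (\<lambda>k. snd (\<eta> k)) y) z \<le> min (hit (walk (\<lambda>k. snd (\<eta> k)) y) x) t"
            using path_event[of "\<lambda>k. fst (\<eta> k)" "\<lambda>k. snd (\<eta> k)" x y z t] elim assms(4,5) by auto
          moreover have "walk (\<lambda>k. snd (\<eta> k)) y \<in> space ?S" by (simp add: space_PiM)
          ultimately show "\<eta> \<in> {\<eta>. walk (\<lambda>k. snd (\<eta> k)) y \<in> E}" by (simp add: E_def)
        qed
      qed
    qed
    then show ?thesis unfolding eqE lawj m1 m2 .
  qed
qed

end
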